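(* Let $q>n$ and let $\Theta$ be positively homogeneous of degree $-q$, positive, and $C^1$ on $C\setminus\{o\}$. Let $\mathbb{A}$ be a $C$-asymptotic set and $z\in C\setminus\{o\}$. Then $t\mapsto T_\Theta(\mathbb{A},tz)$ is differentiable on $(0,\infty)$ and for every $t>0$ $$t^{q+1-n}\frac{d}{dt}T_\Theta(\mathbb{A},tz)=(n-q)(\boldsymbol{\chi}_{-C}\ast\Theta)(z)-\int_{z+\frac{1}{t}\mathbb{A}}\langle\nabla\Theta(x),z\rangle\,d\mathcal{H}^n(x).$$ In particular $\frac{d}{dt}\big|_{t=1}T_\Theta(\mathbb{A},tz)=(n-q)(\boldsymbol{\chi}_{-C}\ast\Theta)(z)-\int_{z+\mathbb{A}}\langle\nabla\Theta(x),z\rangle\,d\mathcal{H}^n(x)$.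
   Context: $C\subset\mathbb{R}^n$ ($n\ge2$) is a pointed closed convex cone with nonempty interior. A $C$-asymptotic set is an unbounded closed convex set $\mathbb{A}\subset C$ with nonempty interior and $o\notin\mathbb{A}$ such that $\lim_{x\in\partial\mathbb{A},|x|\to\infty}d(x,\partial C)=0$. $T_\Theta(\mathbb{A},z)=\int_{(z+C)\setminus(z+\mathbb{A})}\Theta\,d\mathcal{H}^n$. $(\boldsymbol{\chi}_{-C}\ast\Theta)(z)=\int_{\mathbb{R}^n}\boldsymbol{\chi}_{-C}(z-x)\Theta(x)\,dx=\int_{z+C}\Theta(x)\,dx$, with $\boldsymbol{\chi}_{-C}$ the indicator of $-C$. "$C^1$ on $C\setminus\{o\}$" means $\Theta$ is the restriction of a $C^1$ function on an open set containing $C\setminus\{o\}$. *)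

theory Defs
  imports "HOL-Analysis.Analysis"
begin

definition pointed_cone :: "'a::euclidean_space set \<Rightarrow> bool" where
  "pointed_cone C \<longleftrightarrow> cone C \<and> convex C \<and> closed C \<and> interior C \<noteq> {} \<and>
     C \<inter> uminus ` C = {0}"

definition C_asymptotic :: "'a::euclidean_space set \<Rightarrow> 'a set \<Rightarrow> bool" where
  "C_asymptotic C A \<longleftrightarrow> A \<subseteq> C \<and> closed A \<and> convex A \<and> \<not> bounded A \<and>
     interior A \<noteq> {} \<and> 0 \<notin> A \<and>
     (\<forall>e>0. \<exists>R. \<forall>x\<in>frontier A. norm x > R \<longrightarrow> infdist x (frontier C) < e)"

text \<open>T_Theta(A,z) = integral of Theta over (z+C) minus (z+A) w.r.t. Lebesgue measure
  (= H^n on R^n).\<close>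
definition T_Theta :: "'a::euclidean_space set \<Rightarrow> ('a \<Rightarrow> real) \<Rightarrow> 'a set \<Rightarrow> 'a \<Rightarrow> real" where
  "T_Theta C \<Theta> A z = integral (((+) z ` C) - ((+) z ` A)) \<Theta>"

definition chi_conv :: "'a::euclidean_space set \<Rightarrow> ('a \<Rightarrow> real) \<Rightarrow> 'a \<Rightarrow> real" where
  "chi_conv C \<Theta> z = integral UNIV (\<lambda>x. indicator (uminus ` C) (z - x) * \<Theta> x)"

end

theory Submission
  imports Defs "HOL-Real_Asymp.Real_Asymp"
begin


lemma lborel_affine_int:
  fixes F :: "'a::euclidean_space \<Rightarrow> real"
  assumes F[measurable]: "F \<in> borel_measurable borel" and c: "c \<noteq> 0"
  shows "integrable lborel F \<longleftrightarrow> integrable lborel (\<lambda>x. F (b + c *\<^sub>R x))"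
    and "integral\<^sup>L lborel F = \<bar>c\<bar>^DIM('a) * integral\<^sup>L lborel (\<lambda>x. F (b + c *\<^sub>R x))"
proof -
  have T[measurable]: "(\<lambda>x::'a. b + c *\<^sub>R x) \<in> borel_measurable borel" by simp
  have "integrable lborel F \<longleftrightarrow> integrable (density (distr lborel borel (\<lambda>x. b + c *\<^sub>R x)) (\<lambda>_. \<bar>c\<bar>^DIM('a))) F"
    using lborel_affine[OF c, of b] by simp
  also have "\<dots> \<longleftrightarrow> integrable (distr lborel borel (\<lambda>x. b + c *\<^sub>R x)) (\<lambda>x. \<bar>c\<bar>^DIM('a) *\<^sub>R F x)"
    by (subst integrable_density) auto
  also have "\<dots> \<longleftrightarrow> integrable lborel (\<lambda>x. \<bar>c\<bar>^DIM('a) *\<^sub>R F (b + c *\<^sub>R x))"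
    by (subst integrable_distr_eq) auto
  also have "\<dots> \<longleftrightarrow> integrable lborel (\<lambda>x. F (b + c *\<^sub>R x))"
    using c by (simp add: integrable_scaleR_right)
  finally show "integrable lborel F \<longleftrightarrow> integrable lborel (\<lambda>x. F (b + c *\<^sub>R x))" .
  have "integral\<^sup>L lborel F = integral\<^sup>L (density (distr lborel borel (\<lambda>x. b + c *\<^sub>R x)) (\<lambda>_. \<bar>c\<bar>^DIM('a))) F"
    using lborel_affine[OF c, of b] by simp
  also have "\<dots> = integral\<^sup>L (distr lborel borel (\<lambda>x. b + c *\<^sub>R x)) (\<lambda>x. \<bar>c\<bar>^DIM('a) *\<^sub>R F x)"
    by (subst integral_density) auto
  also have "\<dots> = integral\<^sup>L lborel (\<lambda>x. \<bar>c\<bar>^DIM('a) *\<^sub>R F (b + c *\<^sub>R x))"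
    by (subst integral_distr) auto
  also have "\<dots> = \<bar>c\<bar>^DIM('a) * integral\<^sup>L lborel (\<lambda>x. F (b + c *\<^sub>R x))"
    by simp
  finally show "integral\<^sup>L lborel F = \<bar>c\<bar>^DIM('a) * integral\<^sup>L lborel (\<lambda>x. F (b + c *\<^sub>R x))" .
qed

lemma lborel_set_affine:
  fixes f :: "'a::euclidean_space \<Rightarrow> real"
  assumes c: "c > 0" and meas: "(\<lambda>x. indicator S x * f x) \<in> borel_measurable borel"
    and int: "set_integrable lborel S f"
  shows "set_integrable lborel ((\<lambda>x. b + c *\<^sub>R x) -` S) (\<lambda>x. f (b + c *\<^sub>R x))"
    and "(LINT x:S|lborel. f x) = c^DIM('a) * (LINT x:(\<lambda>x. b + c *\<^sub>R x) -` S|lborel. f (b + c *\<^sub>R x))"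
proof -
  have c0: "c \<noteq> 0" using c by simp
  have eq: "(\<lambda>x. indicator ((\<lambda>x. b + c *\<^sub>R x) -` S) x * f (b + c *\<^sub>R x)) = (\<lambda>x. (\<lambda>y. indicator S y * f y) (b + c *\<^sub>R x))"
    by (auto simp: indicator_def)
  show "set_integrable lborel ((\<lambda>x. b + c *\<^sub>R x) -` S) (\<lambda>x. f (b + c *\<^sub>R x))"
    using int lborel_affine_int(1)[OF meas c0, of b] unfolding set_integrable_def by (simp add: eq)
  show "(LINT x:S|lborel. f x) = c^DIM('a) * (LINT x:(\<lambda>x. b + c *\<^sub>R x) -` S|lborel. f (b + c *\<^sub>R x))"
    using lborel_affine_int(2)[OF meas c0, of b] c unfolding set_lebesgue_integral_def by (simp add: eq)
qed



lemma cone_sum_in: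
  assumes "cone C" "convex C" "0 \<in> C" "finite S" "\<And>x. x \<in> S \<Longrightarrow> u x \<ge> 0 \<and> x \<in> C"
  shows "(\<Sum>x\<in>S. u x *\<^sub>R x) \<in> C"
  using assms(4,5)
proof (induction S rule: finite_induct)
  case empty then show ?case using assms(3) by simp
next
  case (insert a S)
  have "u a *\<^sub>R a \<in> C" using insert(4)[of a] assms(1) by (auto simp: cone_def)
  moreover have "(\<Sum>x\<in>S. u x *\<^sub>R x) \<in> C" using insert by auto
  ultimately have "(u a *\<^sub>R a) + (\<Sum>x\<in>S. u x *\<^sub>R x) \<in> C"
    using assms(1,2) convex_cone by blast
  then show ?case using insert by simp
qed

lemma pointed_cone_functional:
  fixes C :: "'a::euclidean_space set"
  assumes "pointed_cone C"
  shows "\<exists>l c. c > 0 \<and> (\<forall>x\<in>C. c * norm x \<le> l \<bullet> x)"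
proof -
  have cC: "cone C" "convex C" "closed C" and pt: "C \<inter> uminus ` C = {0}"
    using assms by (auto simp: pointed_cone_def)
  have 0: "0 \<in> C" using pt by auto
  let ?K = "convex hull (C \<inter> sphere 0 1)"
  have "compact (C \<inter> sphere 0 1)" using cC(3) by (simp add: compact_Int_closed closed_Int_compact)
  then have cK: "compact ?K" by (rule compact_convex_hull)
  have "0 \<notin> ?K"
  proof
    assume "0 \<in> ?K"
    then obtain S u where S: "finite S" "S \<subseteq> C \<inter> sphere 0 1" "\<forall>x\<in>S. 0 \<le> u x" "sum u S = 1"
      "(\<Sum>v\<in>S. u v *\<^sub>R v) = 0"
      unfolding convex_hull_explicit by blast
    have "\<exists>i\<in>S. u i > 0"
    proof (rule ccontr)
      assume "\<not> (\<exists>i\<in>S. u i > 0)"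
      then have "\<forall>x\<in>S. u x = 0" using S(3) by force
      then have "sum u S = 0" by simp
      with S(4) show False by simp
    qed
    then obtain i where i: "i \<in> S" "u i > 0" by blast
    have "(\<Sum>v\<in>S. u v *\<^sub>R v) = u i *\<^sub>R i + (\<Sum>v\<in>S - {i}. u v *\<^sub>R v)"
      using S(1) i(1) by (simp add: sum.remove)
    then have e: "u i *\<^sub>R i = - (\<Sum>v\<in>S - {i}. u v *\<^sub>R v)" using S(5)
      by (simp add: add_eq_0_iff)
    have "(\<Sum>v\<in>S - {i}. u v *\<^sub>R v) \<in> C"
      using S by (intro cone_sum_in[OF cC(1,2) 0]) auto
    then have "u i *\<^sub>R i \<in> uminus ` C" using e by auto
    moreover have "u i *\<^sub>R i \<in> C" using cC(1) i S(2) unfolding cone_def by (meson IntE less_imp_le subsetD)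
    ultimately have "u i *\<^sub>R i = 0" using pt by (metis IntI singletonD)
    then show False using i S(2) by (metis IntE mem_sphere_0 norm_zero scaleR_eq_0_iff subsetD zero_neq_one less_irrefl)
  qed
  then obtain a b where ab: "a \<noteq> 0" "0 < b" "\<forall>x\<in>?K. inner a x > b"
    using separating_hyperplane_closed_0[OF convex_convex_hull compact_imp_closed[OF cK] \<open>0 \<notin> ?K\<close>] by blast
  have "b * norm x \<le> a \<bullet> x" if "x \<in> C" for x
  proof (cases "x = 0")
    case True then show ?thesis by simp
  next
    case False
    have "(1 / norm x) *\<^sub>R x \<in> C \<inter> sphere 0 1"
      using cC(1) that False by (auto simp: cone_def)
    then have "(1 / norm x) *\<^sub>R x \<in> ?K" using hull_subset[of "C \<inter> sphere 0 1" convex] by (rule set_rev_mp)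
    then have "a \<bullet> ((1 / norm x) *\<^sub>R x) > b" using ab(3) by blast
    then have "(a \<bullet> x) / norm x > b" by (simp add: inner_commute)
    then show ?thesis using False by (simp add: field_simps)
  qed
  then show ?thesis using ab(2) by blast
qed



lemma has_integral_shifted_powr:
  fixes r \<alpha> :: real
  assumes r: "r > 1" and a: "\<alpha> > 0"
  shows "((\<lambda>u. (\<alpha> + u) powr (-r)) has_integral \<alpha> powr (1 - r) / (r - 1)) {0..}"
proof (rule has_integral_to_inf)
  define F where "F \<equiv> \<lambda>y. (\<alpha> + y) powr (1 - r) / (1 - r)"
  have der: "(F has_real_derivative (\<alpha> + x) powr (-r)) (at x within S)" if "x \<ge> 0" for x S
  proof -
    have "((\<lambda>u. (\<alpha> + u) powr (1 - r)) has_real_derivative (1 - r) * (\<alpha> + x) powr (1 - r - of_nat 1) * 1) (at x)"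
      by (rule DERIV_fun_powr) (use a that in \<open>auto intro!: derivative_eq_intros\<close>)
    then have "(F has_real_derivative (1 - r) * (\<alpha> + x) powr (1 - r - of_nat 1) * 1 / (1 - r)) (at x)"
      unfolding F_def by (rule DERIV_cdivide)
    moreover have "(1 - r) * (\<alpha> + x) powr (1 - r - of_nat 1) * 1 / (1 - r) = (\<alpha> + x) powr (-r)"
      using r by simp
    ultimately show ?thesis by (metis has_field_derivative_at_within)
  qed
  have "((\<lambda>u. (\<alpha> + u) powr (-r)) has_integral (F y - F 0)) {0..y}" if "y \<ge> 0" for y
    using that der
    by (intro fundamental_theorem_of_calculus that)
       (auto simp flip: has_real_derivative_iff_has_vector_derivative)
  then have "\<forall>\<^sub>F y in at_top. integral {0..y} (\<lambda>u. (\<alpha> + u) powr (-r)) = F y - F 0"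
    by (meson eventually_at_top_linorderI integral_unique)
  moreover have "((\<lambda>y::real. F y - F 0) \<longlongrightarrow> \<alpha> powr (1 - r) / (r - 1)) at_top"
  proof -
    have "((\<lambda>y::real. (\<alpha> + y) powr (1 - r)) \<longlongrightarrow> 0) at_top" using assms by real_asymp
    then have "((\<lambda>y::real. (\<alpha> + y) powr (1 - r) / (1 - r) - \<alpha> powr (1 - r) / (1 - r)) \<longlongrightarrow> 0 / (1 - r) - \<alpha> powr (1 - r) / (1 - r)) at_top"
      using r by (intro tendsto_intros) auto
    moreover have "0 / (1 - r) - \<alpha> powr (1 - r) / (1 - r) = \<alpha> powr (1 - r) / (r - 1)"
      using r by (simp add: field_simps)
    ultimately show ?thesis unfolding F_def by simp
  qed
  ultimately show "((\<lambda>y. integral {0..y} (\<lambda>u. (\<alpha> + u) powr (-r))) \<longlongrightarrow> \<alpha> powr (1 - r) / (r - 1)) at_top"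
    by (simp add: filterlim_cong)
  show "(\<lambda>u. (\<alpha> + u) powr (-r)) integrable_on {0..y}" for y
    using a by (intro integrable_continuous_interval continuous_intros) auto
  show "y \<ge> 0 \<Longrightarrow> (\<alpha> + y) powr (-r) \<ge> 0" for y by simp
qed

lemma nn_integral_abs_powr_finite:
  fixes r \<alpha> :: real
  assumes r: "r > 1" and a: "\<alpha> > 0"
  shows "(\<integral>\<^sup>+u. ennreal ((\<alpha> + \<bar>u\<bar>) powr (-r)) \<partial>lborel) < \<infinity>"
proof -
  define g where "g = (\<lambda>u::real. (\<alpha> + \<bar>u\<bar>) powr (-r))"
  have gm[measurable]: "g \<in> borel_measurable borel" unfolding g_def by measurable
  have I0: "(\<integral>\<^sup>+u. ennreal ((\<alpha> + u) powr (-r)) * indicator {0..} u \<partial>lborel) = ennreal (\<alpha> powr (1 - r) / (r - 1))"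
    by (rule nn_integral_has_integral_lebesgue'[OF _ has_integral_shifted_powr[OF r a]]) simp
  have e1: "(\<integral>\<^sup>+u. ennreal (g u) * indicator {0..} u \<partial>lborel) = (\<integral>\<^sup>+u. ennreal ((\<alpha> + u) powr (-r)) * indicator {0..} u \<partial>lborel)"
    by (intro nn_integral_cong) (auto simp: g_def indicator_def)
  have e2: "(\<integral>\<^sup>+u. ennreal (g u) * indicator {..0} u \<partial>lborel) = (\<integral>\<^sup>+u. ennreal (g u) * indicator {0..} u \<partial>lborel)"
  proof -
    define h where "h = (\<lambda>u. ennreal (g u) * indicator {..0} u)"
    have hm[measurable]: "h \<in> borel_measurable borel" unfolding h_def by measurable
    have "(\<integral>\<^sup>+u. ennreal (g u) * indicator {..0} u \<partial>lborel) = (\<integral>\<^sup>+u. h (0 + -1 * u) \<partial>lborel)"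
      using nn_integral_real_affine[OF hm, of "-1" 0] unfolding h_def by simp
    also have "\<dots> = (\<integral>\<^sup>+u. ennreal (g u) * indicator {0..} u \<partial>lborel)"
      by (intro nn_integral_cong) (auto simp: g_def h_def indicator_def)
    finally show ?thesis .
  qed
  have "(\<integral>\<^sup>+u. ennreal (g u) \<partial>lborel) \<le> (\<integral>\<^sup>+u. ennreal (g u) * indicator {0..} u + ennreal (g u) * indicator {..0} u \<partial>lborel)"
    by (intro nn_integral_mono) (auto simp: indicator_def)
  also have "\<dots> = (\<integral>\<^sup>+u. ennreal (g u) * indicator {0..} u \<partial>lborel) + (\<integral>\<^sup>+u. ennreal (g u) * indicator {..0} u \<partial>lborel)"
    by (intro nn_integral_add) auto
  also have "\<dots> < \<infinity>" unfolding e2 e1 I0 by simp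
  finally show ?thesis unfolding g_def .
qed

lemma integrable_norm_powr:
  fixes p \<alpha> :: real
  assumes p: "p > real DIM('a)" and a: "\<alpha> > 0"
  shows "integrable lborel (\<lambda>x::'a::euclidean_space. (\<alpha> + norm x) powr (-p))"
proof (rule integrableI_bounded)
  show "(\<lambda>x::'a. (\<alpha> + norm x) powr (-p)) \<in> borel_measurable lborel" by measurable
  define r where "r = p / real DIM('a)"
  have r: "r > 1" using p by (simp add: r_def field_simps)
  have pt: "(\<alpha> + norm x) powr (-p) \<le> (\<Prod>b\<in>Basis. (\<alpha> + \<bar>x \<bullet> b\<bar>) powr (-r))" for x :: 'a
  proof -
    have pos: "\<alpha> + norm x > 0" using a by (simp add: add_pos_nonneg)
    have "(\<Prod>b\<in>(Basis::'a set). (\<alpha> + norm x) powr (-r)) = ((\<alpha> + norm x) powr (-r)) ^ DIM('a)"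
      by simp
    also have "\<dots> = ((\<alpha> + norm x) powr (-r)) powr (real DIM('a))"
      using pos by (simp add: powr_realpow)
    also have "\<dots> = (\<alpha> + norm x) powr (-p)"
      by (simp add: powr_powr r_def)
    finally have "(\<alpha> + norm x) powr (-p) = (\<Prod>b\<in>(Basis::'a set). (\<alpha> + norm x) powr (-r))" by simp
    also have "\<dots> \<le> (\<Prod>b\<in>Basis. (\<alpha> + \<bar>x \<bullet> b\<bar>) powr (-r))"
    proof (intro prod_mono conjI)
      fix b :: 'a assume b: "b \<in> Basis"
      show "0 \<le> (\<alpha> + norm x) powr (-r)" by simp
      have "\<bar>x \<bullet> b\<bar> \<le> norm x" using b by (rule Basis_le_norm)
      then show "(\<alpha> + norm x) powr (-r) \<le> (\<alpha> + \<bar>x \<bullet> b\<bar>) powr (-r)"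
        using a r by (intro powr_mono2') auto
    qed
    finally show ?thesis .
  qed
  have "(\<integral>\<^sup>+x. ennreal (norm ((\<alpha> + norm (x::'a)) powr (-p))) \<partial>lborel) \<le> (\<integral>\<^sup>+x. (\<Prod>b\<in>Basis. ennreal ((\<alpha> + \<bar>(x::'a) \<bullet> b\<bar>) powr (-r))) \<partial>lborel)"
  proof (intro nn_integral_mono)
    fix x :: 'a
    have "(\<Prod>b\<in>Basis. ennreal ((\<alpha> + \<bar>x \<bullet> b\<bar>) powr (-r))) = ennreal (\<Prod>b\<in>Basis. (\<alpha> + \<bar>x \<bullet> b\<bar>) powr (-r))"
      by (rule prod_ennreal) simp
    moreover have "norm ((\<alpha> + norm x) powr (-p)) = (\<alpha> + norm x) powr (-p)" by simp
    ultimately show "ennreal (norm ((\<alpha> + norm x) powr (-p))) \<le> (\<Prod>b\<in>Basis. ennreal ((\<alpha> + \<bar>x \<bullet> b\<bar>) powr (-r)))"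
      using pt[of x] by (simp add: ennreal_leI)
  qed
  also have "\<dots> = (\<Prod>b\<in>(Basis::'a set). (\<integral>\<^sup>+u. ennreal ((\<alpha> + \<bar>u\<bar>) powr (-r)) \<partial>lborel))"
    by (rule nn_integral_lborel_prod[where f="\<lambda>b u. ennreal ((\<alpha> + \<bar>u\<bar>) powr (-r))"]) auto
  also have "\<dots> < \<infinity>"
    using nn_integral_abs_powr_finite[OF r a] by (simp add: power_less_top_ennreal)
  finally show "(\<integral>\<^sup>+x. ennreal (norm ((\<alpha> + norm (x::'a)) powr (-p))) \<partial>lborel) < \<infinity>" .
qed



context
  fixes C A :: "'a::euclidean_space set" and \<Theta> :: "'a \<Rightarrow> real" and grad :: "'a \<Rightarrow> 'a"
    and q :: real and z :: 'a and l :: 'a and c0 L :: real and U :: "'a set"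
  assumes coneC: "cone C" and convC: "convex C" and closedC: "closed C" and intC: "interior C \<noteq> {}"
    and lC: "\<And>x. x \<in> C \<Longrightarrow> c0 * norm x \<le> l \<bullet> x" and c0: "c0 > 0"
    and lL: "\<And>x. l \<bullet> x \<le> L * norm x" and L: "L > 0"
    and q: "q > real DIM('a)"
    and homog: "\<And>x t. x \<in> C - {0} \<Longrightarrow> t > 0 \<Longrightarrow> \<Theta> (t *\<^sub>R x) = t powr (- q) * \<Theta> x"
    and U: "open U" "C - {0} \<subseteq> U" and gradc: "continuous_on U grad"
    and Thder: "\<And>x. x \<in> U \<Longrightarrow> (\<Theta> has_derivative (\<lambda>h. grad x \<bullet> h)) (at x)"
    and AC: "A \<subseteq> C" and closedA: "closed A"
    and zC: "z \<in> C" and z0: "z \<noteq> 0"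
begin

lemma zeroC: "0 \<in> C"
  using coneC zC unfolding cone_def by (metis scaleR_zero_left order_refl)

lemma add_C: "x \<in> C \<Longrightarrow> y \<in> C \<Longrightarrow> x + y \<in> C"
  using coneC convC convex_cone by blast

lemma smult_C: "x \<in> C \<Longrightarrow> s \<ge> 0 \<Longrightarrow> s *\<^sub>R x \<in> C"
  using coneC unfolding cone_def by blast

lemma ThetaC: "continuous_on U \<Theta>"
proof -
  have "isCont \<Theta> x" if "x \<in> U" for x
    using Thder[OF that] has_derivative_continuous by blast
  then show ?thesis by (simp add: continuous_at_imp_continuous_on)
qed

lemma norm_lower:
  assumes "a \<in> C" "s > 0"
  shows "c0 / L * (s * norm z + norm a) \<le> norm (s *\<^sub>R z + a)"
proof -
  have "s *\<^sub>R z + a \<in> C" using assms zC by (intro add_C smult_C) auto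
  have "c0 * (s * norm z + norm a) = s * (c0 * norm z) + c0 * norm a" by (simp add: algebra_simps)
  also have "\<dots> \<le> s * (l \<bullet> z) + l \<bullet> a"
    using lC[OF zC] lC[OF assms(1)] assms(2) by (intro add_mono mult_left_mono) auto
  also have "\<dots> = l \<bullet> (s *\<^sub>R z + a)" by (simp add: inner_add_right)
  also have "\<dots> \<le> L * norm (s *\<^sub>R z + a)" by (rule lL)
  finally show ?thesis using L by (simp add: field_simps)
qed

lemma nonzero_shift:
  assumes "a \<in> C" "s > 0"
  shows "s *\<^sub>R z + a \<in> C - {0}"
proof -
  have "0 < c0 / L * (s * norm z + norm a)" using c0 L z0 assms by (intro mult_pos_pos add_pos_nonneg) auto
  then have "s *\<^sub>R z + a \<noteq> 0" using norm_lower[OF assms] by auto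
  then show ?thesis using assms zC by (auto intro!: add_C smult_C)
qed

lemma norm_lower2:
  assumes "x \<in> (+) (s *\<^sub>R z) ` C" "s > 0"
  shows "c0 / (2 * L) * (s * norm z + norm x) \<le> norm x"
proof -
  obtain a where a: "a \<in> C" "x = s *\<^sub>R z + a" using assms by auto
  have xC: "x \<in> C" using a assms zC by (auto intro!: add_C smult_C)
  have "c0 * (s * norm z) \<le> l \<bullet> x"
  proof -
    have "c0 * (s * norm z) \<le> c0 * (s * norm z + norm a)" using c0 by simp
    also have "\<dots> \<le> L * norm x" using norm_lower[OF a(1) assms(2)] a(2) L c0 by (simp add: field_simps)
    finally have "c0 * (s * norm z) \<le> L * norm x" .
    show ?thesis
    proof -
      have "c0 * (s * norm z) = s * (c0 * norm z)" by simp
      also have "\<dots> \<le> s * (l \<bullet> z)" using lC[OF zC] assms(2) by simp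
      also have "\<dots> \<le> s * (l \<bullet> z) + l \<bullet> a" using lC[OF a(1)] c0 by (smt (verit) mult_nonneg_nonneg norm_ge_zero)
      also have "\<dots> = l \<bullet> x" using a(2) by (simp add: inner_add_right)
      finally show ?thesis .
    qed
  qed
  moreover have "c0 * norm x \<le> l \<bullet> x" using lC[OF xC] .
  ultimately have "c0 * (s * norm z + norm x) \<le> 2 * (l \<bullet> x)" by (simp add: algebra_simps)
  also have "\<dots> \<le> 2 * (L * norm x)" using lL[of x] by simp
  finally show ?thesis using L by (simp add: field_simps)
qed

lemma zero_not_interior: "0 \<notin> interior C"
proof
  assume "0 \<in> interior C"
  then obtain e where e: "e > 0" "ball 0 e \<subseteq> C" using open_contains_ball_eq open_interior interior_subset
    by (metis subset_trans)
  obtain v :: 'a where v: "norm v = e / 2" using vector_choose_size[of "e/2"] e by auto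
  have "v \<in> C" "-v \<in> C" using e v by (auto intro!: subsetD[OF e(2)])
  then have "c0 * norm v \<le> l \<bullet> v" "c0 * norm v \<le> - (l \<bullet> v)" using lC[of v] lC[of "-v"] by auto
  then have "c0 * norm v \<le> 0" by simp
  then show False using c0 e v by (simp add: mult_le_0_iff)
qed

lemma grad_homog_interior:
  assumes x: "x \<in> interior C" and t: "t > 0"
  shows "grad (t *\<^sub>R x) = t powr (-q-1) *\<^sub>R grad x"
proof -
  have xU: "x \<in> U" using x zero_not_interior U interior_subset by blast
  have txC: "t *\<^sub>R x \<in> C - {0}" using x t zero_not_interior interior_subset smult_C by fastforce
  have txU: "t *\<^sub>R x \<in> U" using txC U by blast
  have d1: "((\<lambda>y. \<Theta> (t *\<^sub>R y)) has_derivative (\<lambda>h. grad (t *\<^sub>R x) \<bullet> (t *\<^sub>R h))) (at x)"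
    using has_derivative_compose[OF has_derivative_scaleR_right[OF has_derivative_ident, of t] Thder[OF txU]]
    by (simp add: o_def)
  have d2: "((\<lambda>y. t powr (-q) * \<Theta> y) has_derivative (\<lambda>h. t powr (-q) * (grad x \<bullet> h))) (at x)"
    using Thder[OF xU] by (rule has_derivative_mult_right)
  have d1': "((\<lambda>y. t powr (-q) * \<Theta> y) has_derivative (\<lambda>h. grad (t *\<^sub>R x) \<bullet> (t *\<^sub>R h))) (at x)"
  proof (rule has_derivative_transform_within_open[OF d1 open_interior x])
    fix y assume "y \<in> interior C"
    then have "y \<in> C - {0}" using zero_not_interior interior_subset by blast
    then show "\<Theta> (t *\<^sub>R y) = t powr (-q) * \<Theta> y" using homog t by blast
  qed
  have eq: "(\<lambda>h. grad (t *\<^sub>R x) \<bullet> (t *\<^sub>R h)) = (\<lambda>h. t powr (-q) * (grad x \<bullet> h))"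
    by (rule has_derivative_unique[OF d1' d2])
  define w where "w = t *\<^sub>R grad (t *\<^sub>R x) - t powr (-q) *\<^sub>R grad x"
  have "w \<bullet> w = 0"
  proof -
    have "grad (t *\<^sub>R x) \<bullet> (t *\<^sub>R w) = t powr (-q) * (grad x \<bullet> w)" using fun_cong[OF eq, of w] by simp
    then show ?thesis unfolding w_def by (simp add: inner_diff_left inner_commute algebra_simps)
  qed
  then have "w = 0" by simp
  then have "t *\<^sub>R grad (t *\<^sub>R x) = t powr (-q) *\<^sub>R grad x" unfolding w_def by simp
  then have "grad (t *\<^sub>R x) = (t powr (-q) / t) *\<^sub>R grad x" using t
    by (metis (no_types, lifting) divideR_right less_irrefl scaleR_scaleR divide_inverse_commute)
  also have "t powr (-q) / t = t powr (-q-1)" using t by (simp add: powr_diff)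
  finally show ?thesis .
qed

lemma grad_homog:
  assumes x: "x \<in> C - {0}" and t: "t > 0"
  shows "grad (t *\<^sub>R x) = t powr (-q-1) *\<^sub>R grad x"
proof -
  have "x \<in> closure (interior C)" using convex_closure_interior[OF convC intC] closedC x
    by (simp add: closure_closed)
  then obtain xs where xs: "\<And>k. xs k \<in> interior C" "xs \<longlonglongrightarrow> x"
    using closure_sequential by blast
  have xU: "x \<in> U" using x U by blast
  have txU: "t *\<^sub>R x \<in> U" using x t U smult_C by auto
  have c1: "isCont grad x" using gradc U(1) xU continuous_on_eq_continuous_at by blast
  have c2: "isCont grad (t *\<^sub>R x)" using gradc U(1) txU continuous_on_eq_continuous_at by blast
  have "(\<lambda>k. grad (t *\<^sub>R xs k)) \<longlonglongrightarrow> grad (t *\<^sub>R x)"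
    using isCont_tendsto_compose[OF c2 tendsto_scaleR[OF tendsto_const xs(2)]] .
  moreover have "(\<lambda>k. grad (t *\<^sub>R xs k)) \<longlonglongrightarrow> t powr (-q-1) *\<^sub>R grad x"
  proof -
    have "(\<lambda>k. t powr (-q-1) *\<^sub>R grad (xs k)) \<longlonglongrightarrow> t powr (-q-1) *\<^sub>R grad x"
      using isCont_tendsto_compose[OF c1 xs(2)] by (intro tendsto_scaleR tendsto_const)
    then show ?thesis using grad_homog_interior[OF xs(1) t] by simp
  qed
  ultimately show ?thesis using LIMSEQ_unique by blast
qed


lemma sphere_bound:
  fixes f :: "'a \<Rightarrow> 'b::real_normed_vector"
  assumes "continuous_on U f"
  shows "\<exists>B\<ge>0. \<forall>y\<in>C \<inter> sphere 0 1. norm (f y) \<le> B"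
proof -
  have "compact (C \<inter> sphere 0 1)" using closedC by (simp add: closed_Int_compact)
  moreover have "C \<inter> sphere 0 1 \<subseteq> U" using U by auto
  ultimately have "compact (f ` (C \<inter> sphere 0 1))"
    using assms by (intro compact_continuous_image) (auto intro: continuous_on_subset)
  then obtain B where "\<forall>w\<in>f ` (C \<inter> sphere 0 1). norm w \<le> B"
    using compact_imp_bounded bounded_iff by metis
  then have "\<forall>y\<in>C \<inter> sphere 0 1. norm (f y) \<le> max B 0"
    by (metis image_eqI max.coboundedI1)
  then show ?thesis by (intro exI[of _ "max B 0"]) auto
qed

lemma Theta_bound: "\<exists>M\<ge>0. \<forall>x\<in>C - {0}. \<bar>\<Theta> x\<bar> \<le> M * norm x powr (-q)"
proof -
  obtain B where B: "B \<ge> 0" "\<forall>y\<in>C \<inter> sphere 0 1. norm (\<Theta> y) \<le> B"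
    using sphere_bound[OF ThetaC] by blast
  have "\<bar>\<Theta> x\<bar> \<le> B * norm x powr (-q)" if x: "x \<in> C - {0}" for x
  proof -
    define y where "y = (1 / norm x) *\<^sub>R x"
    have nx: "norm x > 0" using x by simp
    have yC: "y \<in> C - {0}" "y \<in> C \<inter> sphere 0 1" using x nx smult_C by (auto simp: y_def)
    have "x = norm x *\<^sub>R y" using nx by (simp add: y_def)
    then have "\<Theta> x = norm x powr (-q) * \<Theta> y" using homog[OF yC(1) nx] by metis
    then have e: "\<bar>\<Theta> x\<bar> = \<bar>\<Theta> y\<bar> * norm x powr (-q)" by (simp add: abs_mult)
    have "\<bar>\<Theta> y\<bar> \<le> B" using B(2) yC(2) by auto
    then show ?thesis unfolding e by (rule mult_right_mono) simp
  qed
  then show ?thesis using B(1) by blast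
qed

lemma grad_bound: "\<exists>M\<ge>0. \<forall>x\<in>C - {0}. norm (grad x) \<le> M * norm x powr (-q-1)"
proof -
  obtain B where B: "B \<ge> 0" "\<forall>y\<in>C \<inter> sphere 0 1. norm (grad y) \<le> B"
    using sphere_bound[OF gradc] by blast
  have "norm (grad x) \<le> B * norm x powr (-q-1)" if x: "x \<in> C - {0}" for x
  proof -
    define y where "y = (1 / norm x) *\<^sub>R x"
    have nx: "norm x > 0" using x by simp
    have yC: "y \<in> C - {0}" "y \<in> C \<inter> sphere 0 1" using x nx smult_C by (auto simp: y_def)
    have "x = norm x *\<^sub>R y" using nx by (simp add: y_def)
    then have "grad x = norm x powr (-q-1) *\<^sub>R grad y" using grad_homog[OF yC(1) nx] by metis
    then have e: "norm (grad x) = norm (grad y) * norm x powr (-q-1)" by simp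
    have "norm (grad y) \<le> B" using B(2) yC(2) by auto
    then show ?thesis unfolding e by (rule mult_right_mono) simp
  qed
  then show ?thesis using B(1) by blast
qed

lemma shift_sub: "s > 0 \<Longrightarrow> (+) (s *\<^sub>R z) ` C \<subseteq> C - {0}"
  using nonzero_shift by (auto simp: add.commute)

lemma set_integrable_powbound:
  fixes f :: "'a \<Rightarrow> real"
  assumes S: "closed S" "S \<subseteq> (+) (s *\<^sub>R z) ` C" and s: "s > 0"
    and f: "continuous_on S f" and bd: "\<And>x. x \<in> S \<Longrightarrow> \<bar>f x\<bar> \<le> K * norm x powr (-p)"
    and p: "p > real DIM('a)" and K: "K \<ge> 0"
  shows "set_integrable lborel S f" "(\<lambda>x. indicator S x * f x) \<in> borel_measurable borel"
proof -
  show m: "(\<lambda>x. indicator S x * f x) \<in> borel_measurable borel"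
    using borel_measurable_continuous_on_indicator[OF _ f] S(1) by simp
  define \<kappa> where "\<kappa> = c0 / (2 * L)"
  have \<kappa>: "\<kappa> > 0" using c0 L by (simp add: \<kappa>_def)
  have al: "s * norm z > 0" using s z0 by simp
  have int: "integrable lborel (\<lambda>x::'a. K * \<kappa> powr (-p) * (s * norm z + norm x) powr (-p))"
    using integrable_norm_powr[OF p al] by simp
  have "\<bar>indicator S x * f x\<bar> \<le> K * \<kappa> powr (-p) * (s * norm z + norm x) powr (-p)" for x
  proof (cases "x \<in> S")
    case False then show ?thesis using K by simp
  next
    case True
    have xs: "x \<in> (+) (s *\<^sub>R z) ` C" using True S by blast
    have low: "\<kappa> * (s * norm z + norm x) \<le> norm x" using norm_lower2[OF xs s] by (simp add: \<kappa>_def)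
    have pos: "0 < \<kappa> * (s * norm z + norm x)" using \<kappa> al by (simp add: add_pos_nonneg)
    have "\<bar>f x\<bar> \<le> K * norm x powr (-p)" by (rule bd[OF True])
    also have "\<dots> \<le> K * (\<kappa> * (s * norm z + norm x)) powr (-p)"
      using p K low pos by (intro mult_left_mono powr_mono2') auto
    also have "\<dots> = K * \<kappa> powr (-p) * (s * norm z + norm x) powr (-p)"
      using \<kappa> al by (simp add: powr_mult)
    finally show ?thesis using True by simp
  qed
  note bd2 = this
  show "set_integrable lborel S f" unfolding set_integrable_def
  proof (rule Bochner_Integration.integrable_bound[OF int])
    show "(\<lambda>x. indicator S x *\<^sub>R f x) \<in> borel_measurable lborel" using m by simp
    show "AE x in lborel. norm (indicator S x *\<^sub>R f x) \<le> norm (K * \<kappa> powr (-p) * (s * norm z + norm x) powr (-p))"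
    proof (rule AE_I2)
      fix x :: 'a
      have "0 \<le> K * \<kappa> powr (-p) * (s * norm z + norm x) powr (-p)" using K by simp
      then show "norm (indicator S x *\<^sub>R f x) \<le> norm (K * \<kappa> powr (-p) * (s * norm z + norm x) powr (-p))"
        using bd2[of x] by simp
    qed
  qed
qed

lemma Theta_int:
  assumes S: "closed S" "S \<subseteq> (+) (s *\<^sub>R z) ` C" and s: "s > 0"
  shows "set_integrable lborel S \<Theta>" "(\<lambda>x. indicator S x * \<Theta> x) \<in> borel_measurable borel"
proof -
  obtain M where M: "M \<ge> 0" "\<forall>x\<in>C - {0}. \<bar>\<Theta> x\<bar> \<le> M * norm x powr (-q)" using Theta_bound by blast
  have SU: "S \<subseteq> U" using S shift_sub[OF s] U by blast
  have c: "continuous_on S \<Theta>" using continuous_on_subset[OF ThetaC SU] .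
  have "\<And>x. x \<in> S \<Longrightarrow> \<bar>\<Theta> x\<bar> \<le> M * norm x powr (-q)" using M S shift_sub[OF s] by blast
  then show "set_integrable lborel S \<Theta>" "(\<lambda>x. indicator S x * \<Theta> x) \<in> borel_measurable borel"
    using set_integrable_powbound[OF S s c _ q M(1)] by auto
qed

lemma grad_int:
  assumes S: "closed S" "S \<subseteq> (+) (s *\<^sub>R z) ` C" and s: "s > 0"
  shows "set_integrable lborel S (\<lambda>x. grad x \<bullet> z)" "(\<lambda>x. indicator S x * (grad x \<bullet> z)) \<in> borel_measurable borel"
proof -
  obtain M where M: "M \<ge> 0" "\<forall>x\<in>C - {0}. norm (grad x) \<le> M * norm x powr (-q-1)" using grad_bound by blast
  have SU: "S \<subseteq> U" using S shift_sub[OF s] U by blast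
  have c: "continuous_on S (\<lambda>x. grad x \<bullet> z)"
    using continuous_on_subset[OF gradc SU] by (intro continuous_intros) auto
  have e: "-(q+1) = -q-1" by simp
  have "\<bar>grad x \<bullet> z\<bar> \<le> (M * norm z) * norm x powr (-(q+1))" if "x \<in> S" for x
  proof -
    have "\<bar>grad x \<bullet> z\<bar> \<le> norm (grad x) * norm z" by (rule Cauchy_Schwarz_ineq2)
    also have "\<dots> \<le> M * norm x powr (-q-1) * norm z"
      using M that S shift_sub[OF s] by (intro mult_right_mono) auto
    finally show ?thesis by (simp only: e mult.assoc mult.commute mult.left_commute)
  qed
  moreover have "q + 1 > real DIM('a)" using q by simp
  ultimately show "set_integrable lborel S (\<lambda>x. grad x \<bullet> z)" "(\<lambda>x. indicator S x * (grad x \<bullet> z)) \<in> borel_measurable borel"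
    using set_integrable_powbound[OF S s c, of "M * norm z" "q+1"] M(1) by auto
qed


lemma chi_conv_eq: "chi_conv C \<Theta> z = integral ((+) z ` C) \<Theta>"
proof -
  have "(\<lambda>x. indicator (uminus ` C) (z - x) * \<Theta> x) = (\<lambda>x. if x \<in> (+) z ` C then \<Theta> x else 0)"
  proof
    fix x
    have "z - x \<in> uminus ` C \<longleftrightarrow> x \<in> (+) z ` C"
    proof
      assume "z - x \<in> uminus ` C"
      then obtain c where "c \<in> C" "z - x = - c" by auto
      then have "x = z + c" by (simp add: algebra_simps)
      then show "x \<in> (+) z ` C" using \<open>c \<in> C\<close> by blast
    next
      assume "x \<in> (+) z ` C"
      then obtain c where "c \<in> C" "x = z + c" by auto
      then have "z - x = - c" by simp
      then show "z - x \<in> uminus ` C" using \<open>c \<in> C\<close> by blast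
    qed
    then show "indicator (uminus ` C) (z - x) * \<Theta> x = (if x \<in> (+) z ` C then \<Theta> x else 0)"
      by (simp add: indicator_def)
  qed
  then show ?thesis unfolding chi_conv_def by (simp add: integral_restrict_UNIV)
qed

lemma closed_shiftC: "closed ((+) w ` C)" using closedC by (rule closed_translation)
lemma closed_shiftA: "closed ((+) w ` A)" using closedA by (rule closed_translation)

lemma shiftA_sub: "(+) w ` A \<subseteq> (+) w ` C" using AC by auto

lemma G_scale:
  assumes s: "s > 0"
  shows "integral ((+) (s *\<^sub>R z) ` C) \<Theta> = s powr (real DIM('a) - q) * integral ((+) z ` C) \<Theta>"
proof -
  have I1: "set_integrable lborel ((+) (s *\<^sub>R z) ` C) \<Theta>" "(\<lambda>x. indicator ((+) (s *\<^sub>R z) ` C) x * \<Theta> x) \<in> borel_measurable borel"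
    using Theta_int[OF closed_shiftC order_refl s] by auto
  have I2: "set_integrable lborel ((+) z ` C) \<Theta>"
    using Theta_int[OF closed_shiftC _ zero_less_one, of z] by simp
  have vim: "(\<lambda>x. 0 + s *\<^sub>R x) -` ((+) (s *\<^sub>R z) ` C) = (+) z ` C"
  proof (intro equalityI subsetI)
    fix x assume "x \<in> (\<lambda>x. 0 + s *\<^sub>R x) -` ((+) (s *\<^sub>R z) ` C)"
    then obtain c where c: "c \<in> C" "s *\<^sub>R x = s *\<^sub>R z + c" by auto
    have "x = (1 / s) *\<^sub>R (s *\<^sub>R x)" using s by simp
    also have "\<dots> = (1 / s) *\<^sub>R (s *\<^sub>R z + c)" using c by simp
    also have "\<dots> = z + (1 / s) *\<^sub>R c" using s by (simp add: scaleR_right_distrib)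
    finally have "x = z + (1 / s) *\<^sub>R c" .
    moreover have "(1 / s) *\<^sub>R c \<in> C" using c s by (intro smult_C) auto
    ultimately show "x \<in> (+) z ` C" by blast
  next
    fix x assume "x \<in> (+) z ` C"
    then obtain c where c: "c \<in> C" "x = z + c" by auto
    then have "0 + s *\<^sub>R x = s *\<^sub>R z + s *\<^sub>R c" by (simp add: scaleR_right_distrib)
    moreover have "s *\<^sub>R c \<in> C" using c s by (intro smult_C) auto
    ultimately show "x \<in> (\<lambda>x. 0 + s *\<^sub>R x) -` ((+) (s *\<^sub>R z) ` C)" by auto
  qed
  have "(LINT x:(+) (s *\<^sub>R z) ` C|lborel. \<Theta> x) = s^DIM('a) * (LINT x:(+) z ` C|lborel. \<Theta> (0 + s *\<^sub>R x))"
    using lborel_set_affine(2)[OF s I1(2) I1(1), of 0] unfolding vim .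
  also have "(LINT x:(+) z ` C|lborel. \<Theta> (0 + s *\<^sub>R x)) = (LINT x:(+) z ` C|lborel. s powr (-q) * \<Theta> x)"
  proof (rule set_lebesgue_integral_cong)
    show "(+) z ` C \<in> sets lborel" using closed_shiftC by simp
    show "\<forall>x. x \<in> (+) z ` C \<longrightarrow> \<Theta> (0 + s *\<^sub>R x) = s powr (-q) * \<Theta> x"
    proof (intro allI impI)
      fix x assume x: "x \<in> (+) z ` C"
      have sub1: "(+) z ` C \<subseteq> C - {0}" using shift_sub[OF zero_less_one] by simp
      have "x \<in> C - {0}" using sub1 x by blast
      then show "\<Theta> (0 + s *\<^sub>R x) = s powr (-q) * \<Theta> x" using homog[OF _ s] by simp
    qed
  qed
  also have "\<dots> = s powr (-q) * (LINT x:(+) z ` C|lborel. \<Theta> x)" by simp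
  finally have "(LINT x:(+) (s *\<^sub>R z) ` C|lborel. \<Theta> x) = s^DIM('a) * s powr (-q) * (LINT x:(+) z ` C|lborel. \<Theta> x)"
    by simp
  moreover have "s^DIM('a) * s powr (-q) = s powr (real DIM('a) - q)"
    using s by (simp add: powr_realpow[symmetric] powr_add[symmetric])
  ultimately show ?thesis
    using set_borel_integral_eq_integral(2)[OF I1(1)] set_borel_integral_eq_integral(2)[OF I2] by simp
qed

lemma H_shift:
  assumes s: "s > 0"
  shows "set_integrable lborel A (\<lambda>a. \<Theta> (s *\<^sub>R z + a))"
    and "integral ((+) (s *\<^sub>R z) ` A) \<Theta> = integral A (\<lambda>a. \<Theta> (s *\<^sub>R z + a))"
proof -
  have I1: "set_integrable lborel ((+) (s *\<^sub>R z) ` A) \<Theta>" "(\<lambda>x. indicator ((+) (s *\<^sub>R z) ` A) x * \<Theta> x) \<in> borel_measurable borel"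
    using Theta_int[OF closed_shiftA shiftA_sub s] by auto
  have vim: "(\<lambda>x. s *\<^sub>R z + 1 *\<^sub>R x) -` ((+) (s *\<^sub>R z) ` A) = A" by auto
  show I2: "set_integrable lborel A (\<lambda>a. \<Theta> (s *\<^sub>R z + a))"
    using lborel_set_affine(1)[OF zero_less_one I1(2) I1(1), of "s *\<^sub>R z"] unfolding vim by simp
  have "(LINT x:(+) (s *\<^sub>R z) ` A|lborel. \<Theta> x) = (LINT x:A|lborel. \<Theta> (s *\<^sub>R z + x))"
    using lborel_set_affine(2)[OF zero_less_one I1(2) I1(1), of "s *\<^sub>R z"] unfolding vim by simp
  then show "integral ((+) (s *\<^sub>R z) ` A) \<Theta> = integral A (\<lambda>a. \<Theta> (s *\<^sub>R z + a))"
    using set_borel_integral_eq_integral(2)[OF I1(1)] set_borel_integral_eq_integral(2)[OF I2] by simp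
qed

lemma D_shift:
  assumes s: "s > 0"
  shows "set_integrable lborel A (\<lambda>a. grad (s *\<^sub>R z + a) \<bullet> z)"
    and "(\<lambda>a. indicator A a * (grad (s *\<^sub>R z + a) \<bullet> z)) \<in> borel_measurable borel"
proof -
  have I1: "set_integrable lborel ((+) (s *\<^sub>R z) ` A) (\<lambda>x. grad x \<bullet> z)" "(\<lambda>x. indicator ((+) (s *\<^sub>R z) ` A) x * (grad x \<bullet> z)) \<in> borel_measurable borel"
    using grad_int[OF closed_shiftA shiftA_sub s] by auto
  have vim: "(\<lambda>x. s *\<^sub>R z + 1 *\<^sub>R x) -` ((+) (s *\<^sub>R z) ` A) = A" by auto
  show "set_integrable lborel A (\<lambda>a. grad (s *\<^sub>R z + a) \<bullet> z)"
    using lborel_set_affine(1)[OF zero_less_one I1(2) I1(1), of "s *\<^sub>R z"] unfolding vim by simp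
  have "continuous_on A (\<lambda>a. grad (s *\<^sub>R z + a) \<bullet> z)"
  proof -
    have sub: "(\<lambda>a. s *\<^sub>R z + a) ` A \<subseteq> U" using shift_sub[OF s] shiftA_sub U by blast
    have ca: "continuous_on A (\<lambda>a. s *\<^sub>R z + a)" by (intro continuous_intros)
    have "continuous_on A (\<lambda>a. grad (s *\<^sub>R z + a))"
      using continuous_on_compose2[OF gradc ca sub] .
    then show ?thesis by (intro continuous_intros)
  qed
  then show "(\<lambda>a. indicator A a * (grad (s *\<^sub>R z + a) \<bullet> z)) \<in> borel_measurable borel"
    using borel_measurable_continuous_on_indicator[of A "\<lambda>a. grad (s *\<^sub>R z + a) \<bullet> z"] closedA by simp
qed

lemma D_scale:
  assumes t: "t > 0"
  shows "integral A (\<lambda>a. grad (t *\<^sub>R z + a) \<bullet> z) = t ^ DIM('a) * t powr (-q-1) * integral ((\<lambda>a. z + (1 / t) *\<^sub>R a) ` A) (\<lambda>x. grad x \<bullet> z)"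
proof -
  note I1 = D_shift[OF t]
  define V where "V = (\<lambda>a. z + (1 / t) *\<^sub>R a) ` A"
  have V: "V = (+) z ` ((\<lambda>a. (1 / t) *\<^sub>R a) ` A)" unfolding V_def by (simp add: image_image)
  have closedV: "closed V" unfolding V by (intro closed_translation closed_scaling closedA)
  have subV: "V \<subseteq> (+) (1 *\<^sub>R z) ` C"
  proof
    fix x assume "x \<in> V"
    then obtain a where a: "a \<in> A" "x = z + (1 / t) *\<^sub>R a" unfolding V_def by blast
    have "(1 / t) *\<^sub>R a \<in> C" using a AC t by (intro smult_C) auto
    then show "x \<in> (+) (1 *\<^sub>R z) ` C" using a by simp
  qed
  have I2: "set_integrable lborel V (\<lambda>x. grad x \<bullet> z)" using grad_int(1)[OF closedV subV zero_less_one] .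
  have vim: "(\<lambda>x. (- t *\<^sub>R z) + t *\<^sub>R x) -` A = V"
  proof (intro equalityI subsetI)
    fix x assume "x \<in> (\<lambda>x. (- t *\<^sub>R z) + t *\<^sub>R x) -` A"
    then have a: "- t *\<^sub>R z + t *\<^sub>R x \<in> A" by simp
    have "(1 / t) *\<^sub>R (- t *\<^sub>R z + t *\<^sub>R x) = - z + x" using t by (simp add: scaleR_right_distrib scaleR_diff_right)
    then have "x = z + (1 / t) *\<^sub>R (- t *\<^sub>R z + t *\<^sub>R x)" by simp
    then show "x \<in> V" unfolding V_def using a by blast
  next
    fix x assume "x \<in> V"
    then obtain a where a: "a \<in> A" "x = z + (1 / t) *\<^sub>R a" unfolding V_def by auto
    have "t *\<^sub>R x = t *\<^sub>R z + a" using t a(2) by (simp add: scaleR_right_distrib)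
    then have "- t *\<^sub>R z + t *\<^sub>R x = a" by simp
    then show "x \<in> (\<lambda>x. (- t *\<^sub>R z) + t *\<^sub>R x) -` A" using a by simp
  qed
  have "(LINT a:A|lborel. grad (t *\<^sub>R z + a) \<bullet> z) = t^DIM('a) * (LINT x:V|lborel. grad (t *\<^sub>R z + ((- t *\<^sub>R z) + t *\<^sub>R x)) \<bullet> z)"
    using lborel_set_affine(2)[OF t I1(2) I1(1), of "- t *\<^sub>R z"] unfolding vim .
  also have "(LINT x:V|lborel. grad (t *\<^sub>R z + ((- t *\<^sub>R z) + t *\<^sub>R x)) \<bullet> z) = (LINT x:V|lborel. t powr (-q-1) * (grad x \<bullet> z))"
  proof (rule set_lebesgue_integral_cong)
    show "V \<in> sets lborel" using closedV by simp
    show "\<forall>x. x \<in> V \<longrightarrow> grad (t *\<^sub>R z + ((- t *\<^sub>R z) + t *\<^sub>R x)) \<bullet> z = t powr (-q-1) * (grad x \<bullet> z)"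
    proof (intro allI impI)
      fix x assume "x \<in> V"
      then have "x \<in> C - {0}" using subV shift_sub[OF zero_less_one] by auto
      then show "grad (t *\<^sub>R z + ((- t *\<^sub>R z) + t *\<^sub>R x)) \<bullet> z = t powr (-q-1) * (grad x \<bullet> z)"
        using grad_homog[OF _ t] by simp
    qed
  qed
  also have "\<dots> = t powr (-q-1) * (LINT x:V|lborel. grad x \<bullet> z)" by simp
  finally show ?thesis
    using set_borel_integral_eq_integral(2)[OF I1(1)] set_borel_integral_eq_integral(2)[OF I2]
    unfolding V_def by simp
qed


lemma phi_deriv:
  assumes a: "a \<in> C" and tau: "\<tau> > 0"
  shows "((\<lambda>s. \<Theta> (s *\<^sub>R z + a)) has_real_derivative (grad (\<tau> *\<^sub>R z + a) \<bullet> z)) (at \<tau> within S)"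
proof -
  have xU: "\<tau> *\<^sub>R z + a \<in> U" using nonzero_shift[OF a tau] U by blast
  have d0: "((\<lambda>s. s *\<^sub>R z + a) has_derivative (\<lambda>h. h *\<^sub>R z)) (at \<tau> within S)"
    by (auto intro!: derivative_eq_intros)
  have "((\<lambda>s. \<Theta> (s *\<^sub>R z + a)) has_derivative (\<lambda>h. grad (\<tau> *\<^sub>R z + a) \<bullet> (h *\<^sub>R z))) (at \<tau> within S)"
    using has_derivative_in_compose[OF d0 has_derivative_subset[OF Thder[OF xU] subset_UNIV]] by (simp add: o_def)
  moreover have "(\<lambda>h. grad (\<tau> *\<^sub>R z + a) \<bullet> (h *\<^sub>R z)) = (*) (grad (\<tau> *\<^sub>R z + a) \<bullet> z)"
    by (simp add: fun_eq_iff mult.commute)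
  ultimately show ?thesis unfolding has_field_derivative_def by simp
qed

lemma grad_dom:
  assumes a: "a \<in> C" and t: "t > 0" and tau: "\<tau> > t / 2" and M: "\<forall>x\<in>C - {0}. norm (grad x) \<le> M * norm x powr (-q-1)" "M \<ge> 0"
  shows "\<bar>grad (\<tau> *\<^sub>R z + a) \<bullet> z\<bar> \<le> M * norm z * (c0 / L) powr (-q-1) * (t / 2 * norm z + norm a) powr (-q-1)"
proof -
  have tau0: "\<tau> > 0" using t tau by simp
  define x where "x = \<tau> *\<^sub>R z + a"
  have x: "x \<in> C - {0}" unfolding x_def using nonzero_shift[OF a tau0] .
  have pos: "0 < c0 / L * (t / 2 * norm z + norm a)" using c0 L t z0 by (intro mult_pos_pos add_pos_nonneg) auto
  have "c0 / L * (t / 2 * norm z + norm a) \<le> c0 / L * (\<tau> * norm z + norm a)"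
    using c0 L tau by (intro mult_left_mono add_right_mono mult_right_mono) auto
  also have "\<dots> \<le> norm x" unfolding x_def by (rule norm_lower[OF a tau0])
  finally have low: "c0 / L * (t / 2 * norm z + norm a) \<le> norm x" .
  have "\<bar>grad x \<bullet> z\<bar> \<le> norm (grad x) * norm z" by (rule Cauchy_Schwarz_ineq2)
  also have "\<dots> \<le> M * norm x powr (-q-1) * norm z" using M x by (intro mult_right_mono) auto
  also have "\<dots> \<le> M * (c0 / L * (t / 2 * norm z + norm a)) powr (-q-1) * norm z"
    using q M(2) low pos by (intro mult_right_mono mult_left_mono powr_mono2') auto
  also have "\<dots> = M * norm z * (c0 / L) powr (-q-1) * (t / 2 * norm z + norm a) powr (-q-1)"
  proof -
    have p1: "c0 / L > 0" using c0 L by simp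
    have p2: "t / 2 * norm z + norm a > 0" using t z0 by (intro add_pos_nonneg) auto
    have "(c0 / L * (t / 2 * norm z + norm a)) powr (-q-1) = (c0 / L) powr (-q-1) * (t / 2 * norm z + norm a) powr (-q-1)"
      by (rule powr_mult)
    then show ?thesis by simp
  qed
  finally show ?thesis unfolding x_def .
qed

lemma H_deriv:
  assumes t: "t > 0"
  shows "((\<lambda>s. integral A (\<lambda>a. \<Theta> (s *\<^sub>R z + a))) has_real_derivative integral A (\<lambda>a. grad (t *\<^sub>R z + a) \<bullet> z)) (at t)"
proof -
  obtain M where M: "M \<ge> 0" "\<forall>x\<in>C - {0}. norm (grad x) \<le> M * norm x powr (-q-1)" using grad_bound by blast
  define Bd where "Bd = (\<lambda>a::'a. M * norm z * (c0 / L) powr (-q-1) * (t / 2 * norm z + norm a) powr (-(q+1)))"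
  have Bd_int: "Bd integrable_on A"
  proof -
    have al: "t / 2 * norm z > 0" using t z0 by simp
    have "integrable lborel (\<lambda>x::'a. (t / 2 * norm z + norm x) powr (-(q+1)))"
      by (rule integrable_norm_powr) (use q al in auto)
    then have "integrable lborel Bd" unfolding Bd_def by simp
    then have "set_integrable lborel A Bd" unfolding set_integrable_def
      using closedA by (intro integrable_mult_indicator) auto
    then show ?thesis by (rule set_borel_integral_eq_integral(1))
  qed
  have e: "-(q+1) = -q-1" by simp
  have dom: "\<bar>grad (\<tau> *\<^sub>R z + a) \<bullet> z\<bar> \<le> Bd a" if "a \<in> A" "\<tau> > t / 2" for a \<tau>
    unfolding Bd_def e using grad_dom[OF _ t that(2) M(2,1)] that(1) AC by blast
  have Hint: "(\<lambda>a. \<Theta> (s *\<^sub>R z + a)) integrable_on A" if "s > 0" for s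
    using set_borel_integral_eq_integral(1)[OF H_shift(1)[OF that]] .
  define h where "h = (\<lambda>s. integral A (\<lambda>a. \<Theta> (s *\<^sub>R z + a)))"
  define D where "D = integral A (\<lambda>a. grad (t *\<^sub>R z + a) \<bullet> z)"
  have "((\<lambda>y. (h y - h t) / (y - t)) \<longlongrightarrow> D) (at t within {t/2<..})"
  proof (unfold tendsto_at_iff_sequentially, intro allI impI)
    fix X :: "nat \<Rightarrow> real" assume X: "\<forall>i. X i \<in> {t/2<..} - {t}" "X \<longlonglongrightarrow> t"
    define f where "f = (\<lambda>k a. (\<Theta> (X k *\<^sub>R z + a) - \<Theta> (t *\<^sub>R z + a)) / (X k - t))"
    have Xpos: "X k > 0" "X k > t / 2" "X k \<noteq> t" for k
    proof -
      have "X k \<in> {t/2<..} - {t}" using X(1) by blast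
      then have "t / 2 < X k" "X k \<noteq> t" by auto
      then show "X k > 0" "X k > t / 2" "X k \<noteq> t" using t by linarith+
    qed
    have fint: "f k integrable_on A" for k
      unfolding f_def using Hint[OF Xpos(1)] Hint[OF t] by (intro integrable_on_divide integrable_diff)
    have fbd: "norm (f k a) \<le> Bd a" if a: "a \<in> A" for k a
    proof -
      have aC: "a \<in> C" using a AC by blast
      have der: "DERIV (\<lambda>s. \<Theta> (s *\<^sub>R z + a)) \<tau> :> grad (\<tau> *\<^sub>R z + a) \<bullet> z" if "\<tau> > t / 2" for \<tau>
        using phi_deriv[OF aC] that t by simp
      show ?thesis
      proof (cases "X k < t")
        case True
        have d1: "DERIV (\<lambda>s. \<Theta> (s *\<^sub>R z + a)) x :> grad (x *\<^sub>R z + a) \<bullet> z" if "X k \<le> x" "x \<le> t" for x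
          by (rule der) (use Xpos(2)[of k] that in linarith)
        obtain \<xi> where \<xi>: "X k < \<xi>" "\<xi> < t" "\<Theta> (t *\<^sub>R z + a) - \<Theta> (X k *\<^sub>R z + a) = (t - X k) * (grad (\<xi> *\<^sub>R z + a) \<bullet> z)"
          using MVT2[OF True d1] by blast
        have "\<Theta> (X k *\<^sub>R z + a) - \<Theta> (t *\<^sub>R z + a) = (X k - t) * (grad (\<xi> *\<^sub>R z + a) \<bullet> z)"
        proof -
          have "(X k - t) * (grad (\<xi> *\<^sub>R z + a) \<bullet> z) = - ((t - X k) * (grad (\<xi> *\<^sub>R z + a) \<bullet> z))" by (metis minus_diff_eq mult_minus_left)
          then show ?thesis using \<xi>(3) by simp
        qed
        then have "f k a = grad (\<xi> *\<^sub>R z + a) \<bullet> z" unfolding f_def using Xpos(3)[of k] by simp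
        moreover have "\<xi> > t / 2" using \<xi>(1) Xpos(2)[of k] by simp
        ultimately show ?thesis using dom[OF a] by simp
      next
        case False
        then have lt: "t < X k" using Xpos(3)[of k] by simp
        have d1: "DERIV (\<lambda>s. \<Theta> (s *\<^sub>R z + a)) x :> grad (x *\<^sub>R z + a) \<bullet> z" if "t \<le> x" "x \<le> X k" for x
          by (rule der) (use t that in linarith)
        obtain \<xi> where \<xi>: "t < \<xi>" "\<xi> < X k" "\<Theta> (X k *\<^sub>R z + a) - \<Theta> (t *\<^sub>R z + a) = (X k - t) * (grad (\<xi> *\<^sub>R z + a) \<bullet> z)"
          using MVT2[OF lt d1] by blast
        have "f k a = grad (\<xi> *\<^sub>R z + a) \<bullet> z" unfolding f_def using \<xi>(3) Xpos(3)[of k] by simp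
        moreover have "\<xi> > t / 2" using \<xi>(1) t by simp
        ultimately show ?thesis using dom[OF a] by simp
      qed
    qed
    have fconv: "(\<lambda>k. f k a) \<longlonglongrightarrow> grad (t *\<^sub>R z + a) \<bullet> z" if a: "a \<in> A" for a
    proof -
      have aC: "a \<in> C" using a AC by blast
      have "((\<lambda>y. (\<Theta> (y *\<^sub>R z + a) - \<Theta> (t *\<^sub>R z + a)) / (y - t)) \<longlongrightarrow> grad (t *\<^sub>R z + a) \<bullet> z) (at t)"
        using phi_deriv[OF aC t, of UNIV] unfolding has_field_derivative_iff by simp
      then have "((\<lambda>y. (\<Theta> (y *\<^sub>R z + a) - \<Theta> (t *\<^sub>R z + a)) / (y - t)) \<circ> X) \<longlonglongrightarrow> grad (t *\<^sub>R z + a) \<bullet> z"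
        unfolding tendsto_at_iff_sequentially using X Xpos(3) by auto
      then show ?thesis unfolding f_def by (simp add: o_def)
    qed
    have lim: "(\<lambda>k. integral A (f k)) \<longlonglongrightarrow> D"
      unfolding D_def by (rule dominated_convergence(2)[OF fint Bd_int fbd fconv])
    have "integral A (f k) = (h (X k) - h t) / (X k - t)" for k
      unfolding f_def h_def
      using Hint[OF Xpos(1)] Hint[OF t] by (simp add: integral_diff integral_divide)
    then show "((\<lambda>y. (h y - h t) / (y - t)) \<circ> X) \<longlonglongrightarrow> D" using lim by (simp add: o_def)
  qed
  then have "((\<lambda>y. (h y - h t) / (y - t)) \<longlongrightarrow> D) (at t)"
    using at_within_open[of t "{t/2<..}"] t by simp
  then show ?thesis unfolding has_field_derivative_iff h_def D_def .
qed

end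


theorem lemma5p4:
  fixes C A :: "'a::euclidean_space set" and \<Theta> :: "'a \<Rightarrow> real" and grad\<Theta> :: "'a \<Rightarrow> 'a"
    and q :: real and z :: 'a
  assumes dim: "DIM('a) \<ge> 2"
    and cone: "pointed_cone C"
    and q: "q > real DIM('a)"
    and homog: "\<And>x t. x \<in> C - {0} \<Longrightarrow> t > 0 \<Longrightarrow> \<Theta> (t *\<^sub>R x) = t powr (- q) * \<Theta> x"
    and pos: "\<And>x. x \<in> C - {0} \<Longrightarrow> \<Theta> x > 0"
    and C1: "\<exists>U. open U \<and> C - {0} \<subseteq> U \<and> continuous_on U grad\<Theta> \<and>
               (\<forall>x\<in>U. (\<Theta> has_derivative (\<lambda>h. grad\<Theta> x \<bullet> h)) (at x))"
    and A: "C_asymptotic C A"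
    and z: "z \<in> C - {0}"
  shows "(\<forall>t>0. \<exists>D. ((\<lambda>s. T_Theta C \<Theta> A (s *\<^sub>R z)) has_real_derivative D) (at t) \<and>
            t powr (q + 1 - real DIM('a)) * D =
              (real DIM('a) - q) * chi_conv C \<Theta> z
              - integral ((\<lambda>a. z + (1 / t) *\<^sub>R a) ` A) (\<lambda>x. grad\<Theta> x \<bullet> z))
         \<and> ((\<lambda>s. T_Theta C \<Theta> A (s *\<^sub>R z)) has_real_derivative
              ((real DIM('a) - q) * chi_conv C \<Theta> z
               - integral ((+) z ` A) (\<lambda>x. grad\<Theta> x \<bullet> z))) (at 1)"
proof -
  have coneC: "cone C" and convC: "convex C" and closedC: "closed C" and intC: "interior C \<noteq> {}"
    using cone by (auto simp: pointed_cone_def)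
  obtain l c0 where c0: "c0 > 0" and lC: "\<And>x. x \<in> C \<Longrightarrow> c0 * norm x \<le> l \<bullet> x"
    using pointed_cone_functional[OF cone] by blast
  define L where "L = norm l + 1"
  have L: "L > 0" unfolding L_def by (simp add: add_nonneg_pos)
  have lL: "\<And>x. l \<bullet> x \<le> L * norm x"
  proof -
    fix x
    have "l \<bullet> x \<le> norm l * norm x" by (rule norm_cauchy_schwarz)
    also have "\<dots> \<le> L * norm x" unfolding L_def by (intro mult_right_mono) auto
    finally show "l \<bullet> x \<le> L * norm x" .
  qed
  obtain U where U: "open U" "C - {0} \<subseteq> U" and gradc: "continuous_on U grad\<Theta>"
    and Thder: "\<And>x. x \<in> U \<Longrightarrow> (\<Theta> has_derivative (\<lambda>h. grad\<Theta> x \<bullet> h)) (at x)"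
    using C1 by blast
  have AC: "A \<subseteq> C" and closedA: "closed A" using A by (auto simp: C_asymptotic_def)
  have zC: "z \<in> C" and z0: "z \<noteq> 0" using z by auto
  note prems = coneC convC closedC intC lC c0 lL L q homog U gradc Thder AC closedA zC z0
  define F where "F = chi_conv C \<Theta> z"
  have Feq: "F = integral ((+) z ` C) \<Theta>" unfolding F_def by (rule chi_conv_eq[OF prems])
  define Ts where "Ts = (\<lambda>s. T_Theta C \<Theta> A (s *\<^sub>R z))"
  define hA where "hA = (\<lambda>s. integral A (\<lambda>a. \<Theta> (s *\<^sub>R z + a)))"
  have Teq: "Ts s = s powr (real DIM('a) - q) * F - hA s" if s: "s > 0" for s
  proof -
    have i1: "\<Theta> integrable_on ((+) (s *\<^sub>R z) ` C)"
      using set_borel_integral_eq_integral(1)[OF Theta_int(1)[OF prems closed_shiftC[OF prems] order_refl s]] .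
    have i2: "\<Theta> integrable_on ((+) (s *\<^sub>R z) ` A)"
      using set_borel_integral_eq_integral(1)[OF Theta_int(1)[OF prems closed_shiftA[OF prems] shiftA_sub[OF prems] s]] .
    have neg: "negligible ((+) (s *\<^sub>R z) ` A - (+) (s *\<^sub>R z) ` C)" using AC by auto
    have "Ts s = integral ((+) (s *\<^sub>R z) ` C) \<Theta> - integral ((+) (s *\<^sub>R z) ` A) \<Theta>"
      unfolding Ts_def T_Theta_def by (rule integral_setdiff[OF i1 i2 neg])
    also have "\<dots> = s powr (real DIM('a) - q) * F - hA s"
      unfolding Feq hA_def using G_scale[OF prems s] H_shift(2)[OF prems s] by simp
    finally show ?thesis .
  qed
  have main: "\<exists>D. (Ts has_real_derivative D) (at t) \<and>
            t powr (q + 1 - real DIM('a)) * D =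
              (real DIM('a) - q) * F - integral ((\<lambda>a. z + (1 / t) *\<^sub>R a) ` A) (\<lambda>x. grad\<Theta> x \<bullet> z)"
    if t: "t > 0" for t
  proof -
    define n where "n = real DIM('a)"
    define It where "It = integral ((\<lambda>a. z + (1 / t) *\<^sub>R a) ` A) (\<lambda>x. grad\<Theta> x \<bullet> z)"
    define Dt where "Dt = integral A (\<lambda>a. grad\<Theta> (t *\<^sub>R z + a) \<bullet> z)"
    have Dteq: "Dt = t ^ DIM('a) * t powr (-q-1) * It" unfolding Dt_def It_def by (rule D_scale[OF prems t])
    have dH: "(hA has_real_derivative Dt) (at t)" unfolding hA_def Dt_def by (rule H_deriv[OF prems t])
    have dP: "((\<lambda>s. s powr (n - q)) has_real_derivative (n - q) * t powr (n - q - 1)) (at t)"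
      by (rule has_real_derivative_powr[OF t])
    have d1: "((\<lambda>s. s powr (n - q) * F - hA s) has_real_derivative (n - q) * t powr (n - q - 1) * F - Dt) (at t)"
      by (intro DERIV_diff DERIV_cmult_right dP dH)
    have d2: "(Ts has_real_derivative (n - q) * t powr (n - q - 1) * F - Dt) (at t)"
    proof (rule has_field_derivative_transform_within_open[OF d1 open_greaterThan])
      show "t \<in> {0<..}" using t by simp
      show "\<And>s. s \<in> {0<..} \<Longrightarrow> s powr (n - q) * F - hA s = Ts s" using Teq unfolding n_def by simp
    qed
    have p1: "t powr (q + 1 - n) * t powr (n - q - 1) = 1" using t by (simp add: powr_add[symmetric])
    have p2: "t powr (q + 1 - n) * (t ^ DIM('a) * t powr (-q-1)) = 1"
      using t by (simp add: powr_realpow[symmetric] powr_add[symmetric] n_def)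
    have "t powr (q + 1 - n) * ((n - q) * t powr (n - q - 1) * F - Dt)
        = (n - q) * F * (t powr (q + 1 - n) * t powr (n - q - 1)) - (t powr (q + 1 - n) * (t ^ DIM('a) * t powr (-q-1))) * It"
      unfolding Dteq by (simp add: algebra_simps)
    also have "\<dots> = (n - q) * F - It" unfolding p1 p2 by simp
    finally show ?thesis using d2 unfolding n_def It_def by blast
  qed
  have part1: "\<forall>t>0. \<exists>D. ((\<lambda>s. T_Theta C \<Theta> A (s *\<^sub>R z)) has_real_derivative D) (at t) \<and>
            t powr (q + 1 - real DIM('a)) * D =
              (real DIM('a) - q) * chi_conv C \<Theta> z
              - integral ((\<lambda>a. z + (1 / t) *\<^sub>R a) ` A) (\<lambda>x. grad\<Theta> x \<bullet> z)"
    using main unfolding Ts_def F_def by blast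
  obtain D where D: "(Ts has_real_derivative D) (at 1)"
    "1 powr (q + 1 - real DIM('a)) * D = (real DIM('a) - q) * F - integral ((\<lambda>a. z + (1 / 1) *\<^sub>R a) ` A) (\<lambda>x. grad\<Theta> x \<bullet> z)"
    using main[of 1] by auto
  have "(\<lambda>a. z + (1 / 1) *\<^sub>R a) ` A = (+) z ` A" by simp
  then have "D = (real DIM('a) - q) * F - integral ((+) z ` A) (\<lambda>x. grad\<Theta> x \<bullet> z)" using D(2) by simp
  then show ?thesis using part1 D(1) unfolding Ts_def F_def by simp
qed

end
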